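(* Let $r$ be a positive integer and $g\in\{0,1\}$. Put $$A_{r,g}(z)=\sum_{m=0}^{r}\binom{r-g+\frac14}{m}\binom{2r-g-m}{r-g}(-z)^m,\qquad B_{r,g}(z)=\sum_{m=0}^{r-g}\binom{r-\frac14}{m}\binom{2r-g-m}{r}(-z)^m.$$ (i) There is a power series $F_{r,g}(z)$ such that for all complex $z$ with $|z|<1$, $$A_{r,g}(z)-(1-z)^{1/4}B_{r,g}(z)=z^{2r+1-g}F_{r,g}(z)$$ and $$|F_{r,g}(z)|\le \frac{\binom{r-g+1/4}{r+1-g}\binom{r-1/4}{r}}{\binom{2r+1-g}{r}}\,(1-|z|)^{-\frac12(2r+1-g)}.$$ (ii) For all complex $z$ with $|1-z|\le1$, $|A_{r,g}(z)|\le\binom{2r-g}{r}$. (iii) For all complex $z\neq0$ and $h\in\{0,1\}$, $A_{r,0}(z)B_{r+h,1}(z)\neq A_{r+h,1}(z)B_{r,0}(z)$.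
   Context: For real $a$ and a nonnegative integer $m$, $\binom{a}{m}=a(a-1)\cdots(a-m+1)/m!$. In (i), $(1-z)^{1/4}$ denotes the principal branch on $|z|<1$ (equal to $1$ at $z=0$). *)

theory Defs
  imports "HOL-Analysis.Analysis"
begin

definition polyA :: "nat \<Rightarrow> nat \<Rightarrow> complex \<Rightarrow> complex" where
  "polyA r g z = (\<Sum>m = 0..r. complex_of_real ((real r - real g + 1/4) gchoose m)
       * of_nat ((2*r - g - m) choose (r - g)) * (- z) ^ m)"

definition polyB :: "nat \<Rightarrow> nat \<Rightarrow> complex \<Rightarrow> complex" where
  "polyB r g z = (\<Sum>m = 0..r - g. complex_of_real ((real r - 1/4) gchoose m)
       * of_nat ((2*r - g - m) choose r) * (- z) ^ m)"

end

theory Submission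
  imports Defs "HOL-Computational_Algebra.Formal_Power_Series" "HOL-Computational_Algebra.Polynomial"
begin


lemma gch_step: "((a::real) gchoose Suc k) * (real k + 1) = (a gchoose k) * (a - real k)"
proof -
  have "(a gchoose Suc k) * fact (Suc k) = (\<Prod>i = 0..<Suc k. a - of_nat i)"
    by (rule gbinomial_mult_fact')
  also have "\<dots> = (\<Prod>i = 0..<k. a - of_nat i) * (a - real k)" by simp
  also have "(\<Prod>i = 0..<k. a - of_nat i) = (a gchoose k) * fact k"
    by (rule gbinomial_mult_fact'[symmetric])
  finally have "(a gchoose Suc k) * (real k + 1) * fact k = (a gchoose k) * (a - real k) * fact k"
    by (simp add: algebra_simps)
  then show ?thesis by simp
qed

lemma gch_pos: "real k < (a::real) + 1 \<Longrightarrow> 0 < a gchoose k"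
proof (induction k)
  case 0 then show ?case by simp
next
  case (Suc k)
  have "(a gchoose Suc k) * (real k + 1) = (a gchoose k) * (a - real k)" by (rule gch_step)
  moreover have "0 < (a gchoose k) * (a - real k)" using Suc by simp
  ultimately show ?case by (smt (verit) of_nat_0_le_iff zero_less_mult_iff)
qed

definition sC :: "nat \<Rightarrow> real" where "sC n = ((1/4::real) gchoose n) * (-1)^n"
definition aC :: "nat \<Rightarrow> nat \<Rightarrow> nat \<Rightarrow> real" where
  "aC r g m = (if m \<le> r then ((real r - real g + 1/4) gchoose m) * real ((2*r-g-m) choose (r-g)) * (-1)^m else 0)"
definition bC :: "nat \<Rightarrow> nat \<Rightarrow> nat \<Rightarrow> real" where
  "bC r g m = (if m \<le> r - g then ((real r - 1/4) gchoose m) * real ((2*r-g-m) choose r) * (-1)^m else 0)"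

lemma sC_rec: "(real n + 1) * sC (Suc n) = (real n - 1/4) * sC n"
proof -
  have "(real n + 1) * sC (Suc n) = - (((1/4::real) gchoose Suc n) * (real n + 1)) * (-1)^n"
    by (simp add: sC_def)
  also have "\<dots> = - (((1/4::real) gchoose n) * (1/4 - real n)) * (-1)^n"
    by (simp only: gch_step)
  also have "\<dots> = (real n - 1/4) * sC n" by (simp add: sC_def algebra_simps)
  finally show ?thesis .
qed

lemma choose_step: "real ((N - 1) choose K) * real N = real (N choose K) * real (N - K)"
proof -
  have "(N - K) * (N choose K) = N * ((N - 1) choose K)" by (rule binomial_absorb_comp)
  then have "real ((N - K) * (N choose K)) = real (N * ((N - 1) choose K))" by simp
  then show ?thesis by (simp only: of_nat_mult mult.commute)
qed

lemma aC_rec: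
  assumes "g \<le> 1" "1 \<le> r"
  shows "(real m + 1) * (real m - (2*real r - real g)) * aC r g (Suc m)
       = (real m - real r) * (real m - (real r - real g + 1/4)) * aC r g m"
proof (cases "m < r")
  case True
  define x where "x = real r - real g + 1/4"
  define N where "N = 2*r - g - m"
  have N1: "2*r-g-Suc m = N - 1" unfolding N_def by simp
  have NK: "N - (r - g) = r - m" unfolding N_def using True assms by simp
  have RN: "real N = 2*real r - real g - real m" unfolding N_def using True assms by simp
  have g1: "(x gchoose Suc m) * (real m + 1) = (x gchoose m) * (x - real m)" by (rule gch_step)
  have c1: "real ((N - 1) choose (r-g)) * real N = real (N choose (r-g)) * real (r - m)"
    using choose_step[of N "r-g"] NK by simp
  have rm: "real (r - m) = real r - real m" using True by simp
  have e1: "real m - (2*real r - real g) = - real N" using RN by simp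
  have "(real m + 1) * (real m - (2*real r - real g)) * aC r g (Suc m)
     = (real m + 1) * (- real N) * ((x gchoose Suc m) * real ((N - 1) choose (r-g)) * (-1)^(Suc m))"
    unfolding e1 unfolding aC_def x_def[symmetric] using True N1 by simp
  also have "\<dots> = ((x gchoose Suc m) * (real m + 1)) * (real ((N - 1) choose (r-g)) * real N) * (-1)^m"
    by (simp add: algebra_simps)
  also have "\<dots> = (x gchoose m) * (x - real m) * (real (N choose (r-g)) * (real r - real m)) * (-1)^m"
    unfolding g1 c1 rm by simp
  also have "\<dots> = (real m - real r) * (real m - x) * aC r g m"
    unfolding aC_def x_def[symmetric] N_def[symmetric] using True by (simp add: algebra_simps)
  finally show ?thesis unfolding x_def .
next
  case False
  then show ?thesis unfolding aC_def by auto
qed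

lemma bC_rec:
  assumes "g \<le> 1" "1 \<le> r"
  shows "(real m + 1) * (real m - (2*real r - real g)) * bC r g (Suc m)
       = (real m - (real r - real g)) * (real m - (real r - 1/4)) * bC r g m"
proof (cases "m < r - g")
  case True
  define x where "x = real r - 1/4"
  define N where "N = 2*r - g - m"
  have N1: "2*r-g-Suc m = N - 1" unfolding N_def by simp
  have NK: "N - r = r - g - m" unfolding N_def using True assms by simp
  have RN: "real N = 2*real r - real g - real m" unfolding N_def using True assms by simp
  have g1: "(x gchoose Suc m) * (real m + 1) = (x gchoose m) * (x - real m)" by (rule gch_step)
  have c1: "real ((N - 1) choose r) * real N = real (N choose r) * real (r - g - m)"
    using choose_step[of N r] NK by simp
  have rm: "real (r - g - m) = real r - real g - real m" using True by simp
  have e1: "real m - (2*real r - real g) = - real N" using RN by simp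
  have "(real m + 1) * (real m - (2*real r - real g)) * bC r g (Suc m)
     = (real m + 1) * (- real N) * ((x gchoose Suc m) * real ((N - 1) choose r) * (-1)^(Suc m))"
    unfolding e1 unfolding bC_def x_def[symmetric] using True N1 by simp
  also have "\<dots> = ((x gchoose Suc m) * (real m + 1)) * (real ((N - 1) choose r) * real N) * (-1)^m"
    by (simp add: algebra_simps)
  also have "\<dots> = (x gchoose m) * (x - real m) * (real (N choose r) * (real r - real g - real m)) * (-1)^m"
    unfolding g1 c1 rm by simp
  also have "\<dots> = (real m - (real r - real g)) * (real m - x) * bC r g m"
    unfolding bC_def x_def[symmetric] N_def[symmetric] using True by (simp add: algebra_simps)
  finally show ?thesis unfolding x_def .
next
  case False
  then have "m = r - g \<or> m > r - g" by auto
  then show ?thesis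
  proof
    assume "m = r - g" then show ?thesis unfolding bC_def using assms by simp
  qed (auto simp: bC_def)
qed



definition hypF :: "real \<Rightarrow> real \<Rightarrow> real \<Rightarrow> real fps \<Rightarrow> real fps" where
  "hypF a b c f = fps_X * fps_deriv (fps_deriv f) + fps_const c * fps_deriv f
     - fps_X^2 * fps_deriv (fps_deriv f) - fps_const (a+b+1) * (fps_X * fps_deriv f) - fps_const (a*b) * f"

lemma hypF_nth: "fps_nth (hypF a b c f) n = (real n + 1) * (real n + c) * fps_nth f (Suc n) - (real n + a) * (real n + b) * fps_nth f n"
proof -
  have x2: "fps_nth (fps_X^2 * fps_deriv (fps_deriv f)) n = real n * (real n - 1) * fps_nth f n"
  proof (cases n)
    case 0 then show ?thesis by (simp add: fps_X_power_mult_nth)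
  next
    case (Suc k) then show ?thesis
      using fps_X_power_mult_nth[of 2 "fps_deriv (fps_deriv f)" n]
      by (cases k) (simp_all add: algebra_simps)
  qed
  have x1: "fps_nth (fps_X * fps_deriv (fps_deriv f)) n = real n * (real n + 1) * fps_nth f (Suc n)"
    by (cases n) (auto simp: algebra_simps)
  have x3: "fps_nth (fps_X * fps_deriv f) n = real n * fps_nth f n"
    by (cases n) auto
  show ?thesis unfolding hypF_def fps_sub_nth fps_add_nth x1 x2
    by (simp add: x3 algebra_simps)
qed

lemma hypF_eq0: "hypF a b c f = 0 \<longleftrightarrow> (\<forall>n. (real n + 1) * (real n + c) * fps_nth f (Suc n) = (real n + a) * (real n + b) * fps_nth f n)"
proof
  assume "hypF a b c f = 0"
  then show "\<forall>n. (real n + 1) * (real n + c) * fps_nth f (Suc n) = (real n + a) * (real n + b) * fps_nth f n"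
    using hypF_nth[of a b c f] by (metis eq_iff_diff_eq_0 fps_zero_nth)
next
  assume "\<forall>n. (real n + 1) * (real n + c) * fps_nth f (Suc n) = (real n + a) * (real n + b) * fps_nth f n"
  then show "hypF a b c f = 0" by (intro fps_ext) (simp add: hypF_nth)
qed

lemma ring_id:
  fixes X S S1 S2 B B1 B2 c k k' ab ab' q :: "'a::comm_ring_1"
  assumes R1: "S1 - X*S1 + q*S = 0" and R2: "S2 - S1 - X*S2 + q*S1 = 0"
    and "k = c + 3*q" "k' = k + 2*q" "ab' = ab + c*q" "4*q = 1"
  shows "(1-X)*(X*(S2*B+2*S1*B1+S*B2) + c*(S1*B+S*B1) - X^2*(S2*B+2*S1*B1+S*B2) - k*(X*(S1*B+S*B1)) - ab*(S*B))
     = S*(1-X)*(X*B2 + c*B1 - X^2*B2 - k'*(X*B1) - ab'*B)"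
proof -
  have id: "(1-X)*(X*(S2*B+2*S1*B1+S*B2) + c*(S1*B+S*B1) - X^2*(S2*B+2*S1*B1+S*B2) - (c + 3*q)*(X*(S1*B+S*B1)) - ab*(S*B))
     - S*(1-X)*(X*B2 + c*B1 - X^2*B2 - (c + 3*q + 2*q)*(X*B1) - (ab + c*q)*B)
     = X*(1-X)*B*(S2 - S1 - X*S2 + q*S1) + ((1-q)*X*B + 2*X*(1-X)*B1 + (c-(c + 3*q)*X)*B)*(S1 - X*S1 + q*S)
       + q*(4*q-1)*X*S*B"
    by (simp add: algebra_simps power2_eq_square)
  show ?thesis using id assms by simp
qed

lemma hyp_prod:
  assumes hS: "fps_deriv S - fps_X * fps_deriv S + fps_const (1/4) * S = 0"
    and hB: "hypF a' b' c B = 0"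
    and p1: "a+b+1 = c+3/4" and p2: "a'+b' = a+b+1/2" and p3: "a'*b' = a*b + c/4"
  shows "hypF a b c (S*B) = 0"
proof -
  have hS2: "fps_deriv (fps_deriv S) - fps_deriv S - fps_X * fps_deriv (fps_deriv S) + fps_const (1/4) * fps_deriv S = 0"
    using arg_cong[OF hS, of fps_deriv] by (simp add: algebra_simps)
  let ?q = "fps_const (1/4::real)"
  have k: "fps_const (a+b+1) = fps_const c + 3 * ?q"
    unfolding p1 by (simp add: numeral_fps_const)
  have k': "fps_const (a'+b'+1) = fps_const (a+b+1) + 2 * ?q"
    unfolding p2 by (simp add: numeral_fps_const)
  have ab': "fps_const (a'*b') = fps_const (a*b) + fps_const c * ?q"
    unfolding p3 by (simp add: numeral_fps_const)
  have q4: "4 * ?q = 1" by (simp add: numeral_fps_const)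
  have eq: "(1-fps_X) * hypF a b c (S*B) = S * (1-fps_X) * hypF a' b' c B"
    unfolding hypF_def
    using ring_id[OF hS hS2 k k' ab' q4, of B "fps_deriv B" "fps_deriv (fps_deriv B)"]
    by (simp add: algebra_simps)
  have "(1 - fps_X :: real fps) \<noteq> 0"
  proof
    assume "(1 - fps_X :: real fps) = 0"
    then have "fps_nth (1 - fps_X :: real fps) 0 = 0" by simp
    then show False by simp
  qed
  then show ?thesis using eq hB by simp
qed



definition tC :: "nat \<Rightarrow> nat \<Rightarrow> nat \<Rightarrow> real" where
  "tC r g n = fps_nth (Abs_fps sC * Abs_fps (bC r g)) n"
definition eC :: "nat \<Rightarrow> nat \<Rightarrow> nat \<Rightarrow> real" where
  "eC r g n = aC r g n - tC r g n"

lemma S_rel: "fps_deriv (Abs_fps sC) - fps_X * fps_deriv (Abs_fps sC) + fps_const (1/4) * Abs_fps sC = 0"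
proof (intro fps_ext)
  fix n
  show "fps_nth (fps_deriv (Abs_fps sC) - fps_X * fps_deriv (Abs_fps sC) + fps_const (1/4) * Abs_fps sC) n = fps_nth 0 n"
  proof (cases n)
    case 0 then show ?thesis by (simp add: sC_def)
  next
    case (Suc k)
    have "(real n + 1) * sC (Suc n) = (real n - 1/4) * sC n" by (rule sC_rec)
    then show ?thesis using Suc by (simp add: algebra_simps)
  qed
qed

lemma A_hyp: assumes "g \<le> 1" "1 \<le> r"
  shows "hypF (- real r) (- (real r - real g + 1/4)) (- (2*real r - real g)) (Abs_fps (aC r g)) = 0"
  unfolding hypF_eq0 using aC_rec[OF assms] by (simp add: algebra_simps)

lemma B_hyp: assumes "g \<le> 1" "1 \<le> r"
  shows "hypF (- (real r - real g)) (- (real r - 1/4)) (- (2*real r - real g)) (Abs_fps (bC r g)) = 0"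
  unfolding hypF_eq0 using bC_rec[OF assms] by (simp add: algebra_simps)

lemma T_hyp: assumes "g \<le> 1" "1 \<le> r"
  shows "hypF (- real r) (- (real r - real g + 1/4)) (- (2*real r - real g)) (Abs_fps sC * Abs_fps (bC r g)) = 0"
  by (rule hyp_prod[OF S_rel B_hyp[OF assms]]) (simp_all add: field_simps)

lemma E_rec: assumes "g \<le> 1" "1 \<le> r"
  shows "(real n + 1) * (real n - (2*real r - real g)) * eC r g (Suc n)
       = (real n - real r) * (real n - (real r - real g + 1/4)) * eC r g n"
proof -
  have 1: "(real n + 1) * (real n - (2*real r - real g)) * aC r g (Suc n)
       = (real n - real r) * (real n - (real r - real g + 1/4)) * aC r g n"
    by (rule aC_rec[OF assms])
  have 2: "(real n + 1) * (real n - (2*real r - real g)) * tC r g (Suc n)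
       = (real n - real r) * (real n - (real r - real g + 1/4)) * tC r g n"
    using T_hyp[OF assms, unfolded hypF_eq0, rule_format, of n] unfolding tC_def by (simp add: algebra_simps)
  have "\<And>x y a b. x * (a - b) = x * a - x * (b::real)" by (simp add: algebra_simps)
  then show ?thesis unfolding eC_def using 1 2 by metis
qed

lemma E_0: assumes "g \<le> 1" "1 \<le> r" shows "eC r g 0 = 0"
proof -
  have "(2*r-g) choose (r-g) = (2*r-g) choose r"
    using binomial_symmetric[of "r-g" "2*r-g"] assms by (simp add: numeral_2_eq_2)
  then show ?thesis
    unfolding eC_def tC_def by (simp add: fps_mult_nth aC_def bC_def sC_def)
qed

lemma E_vanish: assumes "g \<le> 1" "1 \<le> r" shows "n \<le> 2*r - g \<Longrightarrow> eC r g n = 0"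
proof (induction n)
  case 0 then show ?case using E_0[OF assms] by simp
next
  case (Suc n)
  have "(real n + 1) * (real n - (2*real r - real g)) * eC r g (Suc n) = 0"
    using E_rec[OF assms, of n] Suc by simp
  moreover have "real n - (2*real r - real g) \<noteq> 0" using Suc.prems assms by linarith
  ultimately show ?case by simp
qed

lemma E_rec2: assumes "g \<le> 1" "1 \<le> r"
  shows "(real (2*r+1-g) + real k + 1) * (real k + 1) * eC r g (2*r+1-g + Suc k)
       = (real k + real r + 1 - real g) * (real k + real r + 3/4) * eC r g (2*r+1-g + k)"
proof -
  have "(real (2*r+1-g+k) + 1) * (real (2*r+1-g+k) - (2*real r - real g)) * eC r g (Suc (2*r+1-g+k))
       = (real (2*r+1-g+k) - real r) * (real (2*r+1-g+k) - (real r - real g + 1/4)) * eC r g (2*r+1-g+k)"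
    by (rule E_rec[OF assms])
  moreover have "real (2*r+1-g+k) = 2*real r + 1 - real g + real k" using assms by simp
  ultimately show ?thesis by (simp add: algebra_simps)
qed



lemma fpsA: "Abs_fps (aC r g) = Abs_fps sC * Abs_fps (bC r g) + Abs_fps (eC r g)"
  by (intro fps_ext) (simp add: eC_def tC_def)

lemma sum_single:
  assumes "finite A" "a \<in> A" "\<And>i. i \<in> A \<Longrightarrow> i \<noteq> a \<Longrightarrow> f i = 0"
  shows "sum f A = f a"
proof -
  have "sum f A = f a + sum f (A - {a})" using assms by (simp add: sum.remove)
  also have "sum f (A - {a}) = 0" using assms by (intro sum.neutral) auto
  finally show ?thesis by simp
qed

lemma conv_top:
  assumes f: "\<And>i. i > d1 \<Longrightarrow> f i = 0" and g: "\<And>j. j > d2 \<Longrightarrow> g j = (0::real)"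
  shows "fps_nth (Abs_fps f * Abs_fps g) (d1 + d2) = f d1 * g d2"
    and "n > d1 + d2 \<Longrightarrow> fps_nth (Abs_fps f * Abs_fps g) n = 0"
proof -
  have "fps_nth (Abs_fps f * Abs_fps g) (d1 + d2) = (\<Sum>i=0..d1+d2. f i * g (d1 + d2 - i))"
    by (simp add: fps_mult_nth)
  also have "\<dots> = f d1 * g (d1 + d2 - d1)"
  proof (rule sum_single)
    fix i assume "i \<in> {0..d1+d2}" "i \<noteq> d1"
    then have "i > d1 \<or> d1 + d2 - i > d2" by auto
    then show "f i * g (d1 + d2 - i) = 0" using f g by auto
  qed auto
  finally show "fps_nth (Abs_fps f * Abs_fps g) (d1 + d2) = f d1 * g d2" by simp
next
  assume n: "n > d1 + d2"
  have "fps_nth (Abs_fps f * Abs_fps g) n = (\<Sum>i=0..n. f i * g (n - i))"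
    by (simp add: fps_mult_nth)
  also have "\<dots> = 0"
  proof (rule sum.neutral, intro ballI)
    fix i assume "i \<in> {0..n}"
    then have "i > d1 \<or> n - i > d2" using n by auto
    then show "f i * g (n - i) = 0" using f g by auto
  qed
  finally show "fps_nth (Abs_fps f * Abs_fps g) n = 0" .
qed

lemma aC_deg: "i > r \<Longrightarrow> aC r g i = 0" by (simp add: aC_def)
lemma bC_deg: "j > r - g \<Longrightarrow> bC r g j = 0" by (simp add: bC_def)

definition Dseq :: "nat \<Rightarrow> nat \<Rightarrow> nat \<Rightarrow> nat \<Rightarrow> nat \<Rightarrow> real" where
  "Dseq r1 g1 r2 g2 k = fps_nth (Abs_fps (aC r1 g1) * Abs_fps (bC r2 g2) - Abs_fps (aC r2 g2) * Abs_fps (bC r1 g1)) k"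

lemma Dseq_E: "Dseq r1 g1 r2 g2 k = fps_nth (Abs_fps (eC r1 g1) * Abs_fps (bC r2 g2) - Abs_fps (eC r2 g2) * Abs_fps (bC r1 g1)) k"
proof -
  have "Abs_fps (aC r1 g1) * Abs_fps (bC r2 g2) - Abs_fps (aC r2 g2) * Abs_fps (bC r1 g1)
      = Abs_fps (eC r1 g1) * Abs_fps (bC r2 g2) - Abs_fps (eC r2 g2) * Abs_fps (bC r1 g1)"
    unfolding fpsA[of r1 g1] fpsA[of r2 g2] by (simp add: algebra_simps)
  then show ?thesis unfolding Dseq_def by simp
qed

lemma Dseq_low:
  assumes "g1 \<le> 1" "1 \<le> r1" "g2 \<le> 1" "1 \<le> r2" and e: "2*r1+1-g1 < 2*r2+1-g2"
  shows "k < 2*r1+1-g1 \<Longrightarrow> Dseq r1 g1 r2 g2 k = 0"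
    and "Dseq r1 g1 r2 g2 (2*r1+1-g1) = eC r1 g1 (2*r1+1-g1) * bC r2 g2 0"
proof -
  let ?e1 = "2*r1+1-g1"
  have E1: "i < ?e1 \<Longrightarrow> eC r1 g1 i = 0" for i using E_vanish[OF assms(1,2), of i] by simp
  have E2: "i \<le> ?e1 \<Longrightarrow> eC r2 g2 i = 0" for i using E_vanish[OF assms(3,4), of i] e by simp
  have z2: "k \<le> ?e1 \<Longrightarrow> fps_nth (Abs_fps (eC r2 g2) * Abs_fps (bC r1 g1)) k = 0" for k
    by (simp add: fps_mult_nth E2)
  show "k < ?e1 \<Longrightarrow> Dseq r1 g1 r2 g2 k = 0"
    unfolding Dseq_E using z2[of k] by (simp add: fps_mult_nth E1)
  have "fps_nth (Abs_fps (eC r1 g1) * Abs_fps (bC r2 g2)) ?e1 = (\<Sum>i=0..?e1. eC r1 g1 i * bC r2 g2 (?e1 - i))"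
    by (simp add: fps_mult_nth)
  also have "\<dots> = eC r1 g1 ?e1 * bC r2 g2 (?e1 - ?e1)"
    by (rule sum_single) (auto simp: E1)
  finally show "Dseq r1 g1 r2 g2 ?e1 = eC r1 g1 ?e1 * bC r2 g2 0"
    unfolding Dseq_E using z2[of ?e1] by simp
qed

lemma Dseq_top:
  shows "Dseq r1 g1 r2 g2 k = fps_nth (Abs_fps (aC r1 g1) * Abs_fps (bC r2 g2)) k - fps_nth (Abs_fps (aC r2 g2) * Abs_fps (bC r1 g1)) k"
  unfolding Dseq_def by simp

lemma E_val1: assumes "1 \<le> r"
  shows "eC r 1 (2*r) = ((real r - 1 + 1/4) gchoose r) * ((real r - 1/4) gchoose r) / real ((2*r) choose r)"
proof -
  have "Dseq r 1 r 0 (2*r+1-1) = eC r 1 (2*r+1-1) * bC r 0 0"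
    by (rule Dseq_low(2)) (use assms in auto)
  moreover have "Dseq r 1 r 0 (r + r) = aC r 1 r * bC r 0 r"
    unfolding Dseq_top
    using conv_top(1)[of r "aC r 1" r "bC r 0", OF aC_deg bC_deg]
          conv_top(2)[of r "aC r 0" "r - 1" "bC r 1" "r + r", OF aC_deg bC_deg] assms by simp
  ultimately have "eC r 1 (2*r) * bC r 0 0 = aC r 1 r * bC r 0 r" by (simp add: mult_2)
  moreover have "bC r 0 0 = real ((2*r) choose r)" by (simp add: bC_def)
  moreover have "real ((2*r) choose r) > 0" by simp
  moreover have "aC r 1 r * bC r 0 r = ((real r - 1 + 1/4) gchoose r) * ((real r - 1/4) gchoose r)"
    using assms by (simp add: aC_def bC_def mult_2 power_mult_distrib[symmetric] flip: power_add)
  ultimately show ?thesis by (simp add: field_simps)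
qed

lemma E_val0: assumes "1 \<le> r"
  shows "eC r 0 (2*r+1) = ((real r + 1/4) gchoose (r+1)) * ((real r - 1/4) gchoose r) / real ((2*r+1) choose r)"
proof -
  have "Dseq r 0 (r+1) 1 (2*r+1-0) = eC r 0 (2*r+1-0) * bC (r+1) 1 0"
    by (rule Dseq_low(2)) (use assms in auto)
  moreover have "Dseq r 0 (r+1) 1 ((r+1) + r) = - (aC (r+1) 1 (r+1) * bC r 0 r)"
    unfolding Dseq_top
    using conv_top(1)[of "r+1" "aC (r+1) 1" r "bC r 0", OF aC_deg bC_deg]
          conv_top(2)[of r "aC r 0" "r + 1 - 1" "bC (r+1) 1" "(r+1) + r", OF aC_deg bC_deg] assms by simp
  ultimately have "eC r 0 (2*r+1) * bC (r+1) 1 0 = - (aC (r+1) 1 (r+1) * bC r 0 r)"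
    by (simp add: mult_2 add.commute add.left_commute)
  moreover have "bC (r+1) 1 0 = real ((2*r+1) choose r)"
  proof -
    have "(2*r+1) choose (r+1) = (2*r+1) choose r"
      using binomial_symmetric[of r "2*r+1"] by (simp add: numeral_2_eq_2)
    then show ?thesis by (simp add: bC_def)
  qed
  moreover have "real ((2*r+1) choose r) > 0" by simp
  moreover have "aC (r+1) 1 (r+1) * bC r 0 r = - (((real r + 1/4) gchoose (r+1)) * ((real r - 1/4) gchoose r))"
    using assms by (simp add: aC_def bC_def mult_2 power_mult_distrib[symmetric] flip: power_add)
  ultimately show ?thesis by (simp add: field_simps)
qed

lemma E_val: assumes "1 \<le> r" "g \<in> {0, 1}"
  shows "eC r g (2*r+1-g) = ((real r - real g + 1/4) gchoose (r + 1 - g)) * ((real r - 1/4) gchoose r)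
                 / real ((2*r + 1 - g) choose r)"
  using assms E_val0[OF assms(1)] E_val1[OF assms(1)] by auto



definition qC :: "real \<Rightarrow> nat \<Rightarrow> real" where "qC \<sigma> k = ((-\<sigma>) gchoose k) * (-1)^k"

lemma qC_rec: "qC \<sigma> (Suc k) * (real k + 1) = (\<sigma> + real k) * qC \<sigma> k"
proof -
  have "qC \<sigma> (Suc k) * (real k + 1) = - (((-\<sigma>) gchoose Suc k) * (real k + 1)) * (-1)^k"
    by (simp add: qC_def)
  also have "\<dots> = - (((-\<sigma>) gchoose k) * (-\<sigma> - real k)) * (-1)^k" by (simp only: gch_step)
  also have "\<dots> = (\<sigma> + real k) * qC \<sigma> k" by (simp add: qC_def algebra_simps)
  finally show ?thesis .
qed

lemma nonneg_from_mult: "0 \<le> a * b \<Longrightarrow> 0 < b \<Longrightarrow> 0 \<le> (a::real)"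
  using zero_le_mult_iff by force

lemma qC_nonneg: "\<sigma> \<ge> 0 \<Longrightarrow> qC \<sigma> k \<ge> 0"
proof (induction k)
  case 0 then show ?case by (simp add: qC_def)
next
  case (Suc k)
  have "qC \<sigma> (Suc k) * (real k + 1) \<ge> 0" unfolding qC_rec using Suc by simp
  moreover have "real k + 1 > 0" by simp
  ultimately show ?case using nonneg_from_mult by blast
qed

lemma poly_ineq:
  assumes "g \<in> {0,1::nat}" "1 \<le> r"
  shows "(real k + real r + 1 - real g) * (real k + real r + 3/4)
      \<le> (real (2*r+1-g) + real k + 1) * (real (2*r+1-g) / 2 + real k)"
proof -
  have "g = 0 \<or> g = 1" using assms by auto
  then show ?thesis
  proof
    assume g: "g = 0"
    have e: "real (2*r+1-g) = 2*real r + 1" using g by simp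
    have d: "(2*real r + 1 + real k + 1) * ((2*real r + 1) / 2 + real k) - (real k + real r + 1 - real g) * (real k + real r + 3/4)
        = (real r + 3/4)*(real k + real r) + real r/2 + 1/4" using g by (simp add: field_simps)
    have "0 \<le> (real r + 3/4)*(real k + real r)" by simp
    then show ?thesis unfolding e using d by linarith
  next
    assume g: "g = 1"
    have "(real k + real r + 3/4) * (real k + real r) \<le> (2*real r + 1 + real k) * (real r + real k)"
      by (intro mult_mono') (use assms in auto)
    moreover have "real (2*r+1-g) = 2 * real r" using g assms by simp
    ultimately show ?thesis using g by (simp add: algebra_simps)
  qed
qed

lemma E_pos: assumes "g \<in> {0,1::nat}" "1 \<le> r" shows "eC r g (2*r+1-g) > 0"
  unfolding E_val[OF assms(2,1)]
  by (intro divide_pos_pos mult_pos_pos gch_pos) (use assms in auto)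

lemma E_bound:
  assumes "g \<in> {0,1::nat}" "1 \<le> r"
  defines "e \<equiv> 2*r+1-g"
  shows "0 \<le> eC r g (e + k) \<and> eC r g (e + k) \<le> eC r g e * qC (real e / 2) k"
proof (induction k)
  case 0
  have g1: "g \<le> 1" using assms by auto
  have "eC r g e > 0" unfolding e_def by (rule E_pos[OF assms(1,2)])
  then show ?case by (simp add: qC_def)
next
  case (Suc k)
  have g1: "g \<le> 1" using assms by auto
  let ?E = "eC r g (e + k)" and ?E' = "eC r g (e + Suc k)"
  let ?P = "(real k + real r + 1 - real g) * (real k + real r + 3/4)"
  let ?Q = "(real e + real k + 1) * (real k + 1)"
  have rec: "?Q * ?E' = ?P * ?E" unfolding e_def by (rule E_rec2[OF g1 assms(2)])
  have P0: "?P \<ge> 0" using g1 by (intro mult_nonneg_nonneg) auto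
  have Q0: "?Q > 0" by simp
  have Pb: "?P \<le> (real e + real k + 1) * (real e / 2 + real k)"
    unfolding e_def by (rule poly_ineq[OF assms(1,2)])
  have C0: "eC r g e \<ge> 0" using E_pos[OF assms(1,2)] unfolding e_def by simp
  have "?Q * ?E' \<ge> 0" unfolding rec using P0 Suc.IH by simp
  then have E'0: "?E' \<ge> 0" using Q0 nonneg_from_mult[of ?E' ?Q] by (simp add: mult.commute)
  have "?Q * ?E' \<le> (real e + real k + 1) * (real e / 2 + real k) * (eC r g e * qC (real e / 2) k)"
    unfolding rec by (rule mult_mono) (use Suc.IH P0 Pb in simp_all)
  also have "\<dots> = (real e + real k + 1) * eC r g e * ((real e / 2 + real k) * qC (real e / 2) k)"
    by (simp add: algebra_simps)
  also have "\<dots> = (real e + real k + 1) * eC r g e * (qC (real e / 2) (Suc k) * (real k + 1))"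
    by (simp only: qC_rec)
  also have "\<dots> = ?Q * (eC r g e * qC (real e / 2) (Suc k))"
    by (simp add: algebra_simps)
  finally have "?E' \<le> eC r g e * qC (real e / 2) (Suc k)" using Q0 by simp
  then show ?case using E'0 by simp
qed



lemma of_real_gch: "complex_of_real (a gchoose n) = (complex_of_real a gchoose n)"
proof -
  have "fact n * (a gchoose n) = (\<Prod>i = 0..<n. a - of_nat i)" by (rule gbinomial_mult_fact)
  then have "complex_of_real (fact n * (a gchoose n)) = complex_of_real (\<Prod>i = 0..<n. a - of_nat i)" by simp
  then have "fact n * complex_of_real (a gchoose n) = (\<Prod>i = 0..<n. complex_of_real a - of_nat i)"
    by (simp only: of_real_mult of_real_prod of_real_diff of_real_of_nat_eq of_real_fact)
  also have "\<dots> = fact n * (complex_of_real a gchoose n)" by (rule gbinomial_mult_fact[symmetric])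
  finally show ?thesis by simp
qed
lemma S_sums:
  fixes z :: complex assumes "norm z < 1"
  shows "(\<lambda>n. complex_of_real (sC n) * z^n) sums ((1 - z) powr (1/4))"
proof -
  have "norm (-z) < 1" using assms by simp
  from gen_binomial_complex[OF this, of "1/4"]
  have "(\<lambda>n. ((1/4::complex) gchoose n) * (-z)^n) sums ((1 + -z) powr (1/4))" .
  moreover have "complex_of_real (sC n) * z^n = ((1/4::complex) gchoose n) * (-z)^n" for n
  proof -
    have q: "complex_of_real (1/4) = 1/4" by simp
    have "complex_of_real ((1/4::real) gchoose n) = ((1/4::complex) gchoose n)"
      using of_real_gch[of "1/4" n] unfolding q .
    then show ?thesis unfolding sC_def of_real_mult of_real_power of_real_minus of_real_1 power_minus[of z n]
      by (simp only: mult.assoc)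
  qed
  ultimately show ?thesis by (simp only: diff_conv_add_uminus)
qed
lemma ser_mult_poly:
  fixes z :: complex and u b :: "nat \<Rightarrow> complex"
  assumes u: "(\<lambda>n. u n * z^n) sums s" and b: "\<And>m. m > d \<Longrightarrow> b m = 0"
  shows "(\<lambda>n. (\<Sum>m=0..n. b m * u (n-m)) * z^n) sums ((\<Sum>m\<le>d. b m * z^m) * s)"
proof -
  define h where "h m n = (if m \<le> n then b m * u (n-m) * z^n else 0)" for m n
  have hm: "h m sums (b m * z^m * s)" for m
  proof -
    have "(\<lambda>n. (b m * z^m) * (u n * z^n)) sums (b m * z^m * s)" by (rule sums_mult[OF u])
    moreover have "(\<lambda>n. h m (n + m)) = (\<lambda>n. (b m * z^m) * (u n * z^n))"
      by (rule ext) (simp add: h_def power_add algebra_simps)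
    ultimately have "(\<lambda>n. h m (n + m)) sums (b m * z^m * s)" by simp
    then have "h m sums (b m * z^m * s + (\<Sum>i<m. h m i))" by (simp add: sums_iff_shift)
    moreover have "(\<Sum>i<m. h m i) = 0" by (intro sum.neutral) (auto simp: h_def)
    ultimately show ?thesis by simp
  qed
  have "(\<lambda>n. \<Sum>m\<le>d. h m n) sums (\<Sum>m\<le>d. b m * z^m * s)"
    by (rule sums_sum) (rule hm)
  moreover have "(\<Sum>m\<le>d. h m n) = (\<Sum>m=0..n. b m * u (n-m)) * z^n" for n
  proof -
    have "(\<Sum>m\<le>d. h m n) = (\<Sum>m\<in>{..d} \<inter> {..n}. b m * u (n-m) * z^n)"
      unfolding h_def using sum.inter_restrict[of "{..d}" "\<lambda>m. b m * u (n-m) * z^n" "{..n}"] by simp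
    also have "\<dots> = (\<Sum>m\<in>{..n}. b m * u (n-m) * z^n)"
      by (rule sum.mono_neutral_left) (auto simp: b)
    also have "\<dots> = (\<Sum>m=0..n. b m * u (n-m)) * z^n"
      by (simp add: sum_distrib_right atLeast0AtMost)
    finally show ?thesis .
  qed
  ultimately show ?thesis by (simp add: sum_distrib_right)
qed

lemma term_eq: "complex_of_real x * of_nat c * (- z) ^ m = complex_of_real (x * real c * (-1)^m) * z^m"
  unfolding power_minus[of z m] of_real_mult of_real_of_nat_eq of_real_power of_real_minus of_real_1 by (simp only: mult_ac)

lemma polyA_eq: "polyA r g z = (\<Sum>m\<le>r. complex_of_real (aC r g m) * z^m)"
  unfolding polyA_def atLeast0AtMost term_eq by (intro sum.cong) (simp_all add: aC_def)

lemma polyB_eq: "polyB r g z = (\<Sum>m\<le>r-g. complex_of_real (bC r g m) * z^m)"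
  unfolding polyB_def atLeast0AtMost term_eq by (intro sum.cong) (simp_all add: bC_def)



lemma q_sums:
  assumes "norm (z::complex) < 1"
  shows "(\<lambda>k. qC s k * norm z ^ k) sums ((1 - norm z) powr (- s))"
proof -
  have "\<bar>- norm z\<bar> < 1" using assms by simp
  from gen_binomial_real[OF this, of "- s"]
  have h: "(\<lambda>n. ((- s) gchoose n) * (- norm z)^n) sums ((1 + - norm z) powr (- s))" .
  have "qC s k * norm z ^ k = ((- s) gchoose k) * (- norm z)^k" for k
    unfolding qC_def power_minus[of "norm z" k] by (simp only: mult_ac)
  then show ?thesis using h by (simp only: diff_conv_add_uminus)
qed

lemma tC_alt: "complex_of_real (tC r g n) = (\<Sum>m=0..n. complex_of_real (bC r g m) * complex_of_real (sC (n-m)))"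
proof -
  have "tC r g n = fps_nth (Abs_fps (bC r g) * Abs_fps sC) n" unfolding tC_def by (simp add: mult.commute)
  also have "\<dots> = (\<Sum>m=0..n. bC r g m * sC (n-m))" by (simp add: fps_mult_nth)
  finally show ?thesis by simp
qed

lemma part_i:
  assumes r: "1 \<le> r" and g: "g \<in> {0,1}" and z: "norm z < 1"
  defines "e \<equiv> 2*r+1-g"
  defines "c \<equiv> (\<lambda>k. complex_of_real (eC r g (e + k)))"
  shows "summable (\<lambda>n. c n * z ^ n) \<and>
            polyA r g z - (1 - z) powr (1/4) * polyB r g z = z ^ e * (\<Sum>n. c n * z ^ n) \<and>
            norm (\<Sum>n. c n * z ^ n) \<le> eC r g e * (1 - norm z) powr (- (real e / 2))"
proof -
  have g1: "g \<le> 1" using g by auto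
  let ?s = "real e / 2"
  let ?G = "\<lambda>k. eC r g e * (qC ?s k * norm z ^ k)"
  have Gs: "?G sums (eC r g e * (1 - norm z) powr (- ?s))"
    by (rule sums_mult[OF q_sums[OF z]])
  have bnd: "norm (c k * z ^ k) \<le> ?G k" for k
  proof -
    have b: "0 \<le> eC r g (e + k) \<and> eC r g (e + k) \<le> eC r g e * qC ?s k"
      unfolding e_def by (rule E_bound[OF g r])
    have "norm (c k * z ^ k) = eC r g (e + k) * norm z ^ k"
      unfolding c_def using b by (simp add: norm_mult norm_power)
    also have "\<dots> \<le> eC r g e * qC ?s k * norm z ^ k"
      using b by (intro mult_right_mono) auto
    finally show ?thesis by (simp add: mult.assoc)
  qed
  have summ: "summable (\<lambda>n. c n * z ^ n)"
    by (rule summable_comparison_test'[OF sums_summable[OF Gs]]) (rule bnd)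
  have summn: "summable (\<lambda>n. norm (c n * z ^ n))"
    by (rule summable_comparison_test'[OF sums_summable[OF Gs]]) (use bnd in simp)
  have "norm (\<Sum>n. c n * z ^ n) \<le> (\<Sum>n. norm (c n * z ^ n))" by (rule summable_norm[OF summn])
  also have "\<dots> \<le> (\<Sum>n. ?G n)" by (rule suminf_le[OF bnd summn sums_summable[OF Gs]])
  also have "\<dots> = eC r g e * (1 - norm z) powr (- ?s)" by (rule sums_unique[OF Gs, symmetric])
  finally have nb: "norm (\<Sum>n. c n * z ^ n) \<le> eC r g e * (1 - norm z) powr (- ?s)" .
  have hA: "(\<lambda>n. complex_of_real (aC r g n) * z^n) sums polyA r g z"
    unfolding polyA_eq by (rule sums_finite) (auto simp: aC_def)
  have hT0: "(\<lambda>n. (\<Sum>m=0..n. complex_of_real (bC r g m) * complex_of_real (sC (n-m))) * z^n)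
      sums ((\<Sum>m\<le>r-g. complex_of_real (bC r g m) * z^m) * (1 - z) powr (1/4))"
    by (rule ser_mult_poly[OF S_sums[OF z]]) (simp add: bC_def)
  have hT: "(\<lambda>n. complex_of_real (tC r g n) * z^n) sums ((1 - z) powr (1/4) * polyB r g z)"
    using hT0 unfolding tC_alt polyB_eq by (simp add: mult.commute)
  have hE: "(\<lambda>n. complex_of_real (eC r g n) * z^n) sums (polyA r g z - (1 - z) powr (1/4) * polyB r g z)"
    using sums_diff[OF hA hT] unfolding eC_def by (simp add: left_diff_distrib)
  have z0: "(\<Sum>i<e. complex_of_real (eC r g i) * z^i) = 0"
    by (intro sum.neutral ballI) (use E_vanish[OF g1 r] in \<open>auto simp: e_def\<close>)
  have hE2: "(\<lambda>k. complex_of_real (eC r g (k + e)) * z^(k + e)) sums (polyA r g z - (1 - z) powr (1/4) * polyB r g z)"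
    using sums_iff_shift[of "\<lambda>n. complex_of_real (eC r g n) * z^n" e "polyA r g z - (1 - z) powr (1/4) * polyB r g z"] hE z0
    by simp
  have hC: "(\<lambda>k. z^e * (c k * z^k)) sums (z^e * (\<Sum>n. c n * z ^ n))"
    by (rule sums_mult[OF summable_sums[OF summ]])
  have "(\<lambda>k. z^e * (c k * z^k)) = (\<lambda>k. complex_of_real (eC r g (k + e)) * z^(k + e))"
    by (rule ext) (simp add: c_def power_add add.commute mult_ac)
  then have eq: "polyA r g z - (1 - z) powr (1/4) * polyB r g z = z ^ e * (\<Sum>n. c n * z ^ n)"
    using hC hE2 sums_unique2 by metis
  show ?thesis using summ eq nb by simp
qed



lemma polyA_ext: "r \<le> N \<Longrightarrow> polyA r g z = (\<Sum>m\<le>N. complex_of_real (aC r g m) * z^m)"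
  unfolding polyA_eq by (rule sum.mono_neutral_left) (auto simp: aC_def)

lemma polyB_ext: "r - g \<le> N \<Longrightarrow> polyB r g z = (\<Sum>m\<le>N. complex_of_real (bC r g m) * z^m)"
  unfolding polyB_eq by (rule sum.mono_neutral_left) (auto simp: bC_def)

lemma prod_eq:
  assumes "r1 \<le> N" "r2 - g2 \<le> N"
  shows "polyA r1 g1 z * polyB r2 g2 z = (\<Sum>k\<le>N+N. complex_of_real (fps_nth (Abs_fps (aC r1 g1) * Abs_fps (bC r2 g2)) k) * z^k)"
proof -
  have "polyA r1 g1 z * polyB r2 g2 z = (\<Sum>m\<le>N. complex_of_real (aC r1 g1 m) * z^m) * (\<Sum>m\<le>N. complex_of_real (bC r2 g2 m) * z^m)"
    using polyA_ext[OF assms(1)] polyB_ext[OF assms(2)] by simp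
  also have "\<dots> = (\<Sum>k\<le>N+N. (\<Sum>i\<le>k. complex_of_real (aC r1 g1 i) * complex_of_real (bC r2 g2 (k - i))) * z^k)"
    by (rule polynomial_product) (use assms in \<open>auto simp: aC_def bC_def\<close>)
  also have "\<dots> = (\<Sum>k\<le>N+N. complex_of_real (fps_nth (Abs_fps (aC r1 g1) * Abs_fps (bC r2 g2)) k) * z^k)"
    by (intro sum.cong refl) (simp add: fps_mult_nth atLeast0AtMost)
  finally show ?thesis .
qed

lemma D_nonzero:
  assumes "r1 \<le> N" "r2 - g2 \<le> N" "r2 \<le> N" "r1 - g1 \<le> N" "kz \<le> N + N"
    and z: "z \<noteq> 0" and nz: "Dseq r1 g1 r2 g2 kz \<noteq> 0"
    and zero: "\<And>k. k \<noteq> kz \<Longrightarrow> Dseq r1 g1 r2 g2 k = 0"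
  shows "polyA r1 g1 z * polyB r2 g2 z \<noteq> polyA r2 g2 z * polyB r1 g1 z"
proof -
  have "polyA r1 g1 z * polyB r2 g2 z - polyA r2 g2 z * polyB r1 g1 z
      = (\<Sum>k\<le>N+N. complex_of_real (Dseq r1 g1 r2 g2 k) * z^k)"
    unfolding prod_eq[OF assms(1,2)] prod_eq[OF assms(3,4)] Dseq_top
    by (simp add: sum_subtractf left_diff_distrib)
  also have "\<dots> = complex_of_real (Dseq r1 g1 r2 g2 kz) * z^kz"
    by (rule sum_single) (use assms in auto)
  also have "\<dots> \<noteq> 0" using z nz by simp
  finally show ?thesis by simp
qed

lemma part_iii:
  assumes r: "1 \<le> r" and z: "z \<noteq> 0" and h: "h \<in> {0, 1::nat}"
  shows "polyA r 0 z * polyB (r + h) 1 z \<noteq> polyA (r + h) 1 z * polyB r 0 z"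
proof (cases "h = 0")
  case True
  have pos: "eC r 1 (2*r+1-1) > 0" by (rule E_pos) (use r in auto)
  have "polyA r 1 z * polyB r 0 z \<noteq> polyA r 0 z * polyB r 1 z"
  proof (rule D_nonzero[where N = "r" and kz = "2*r"])
    show "Dseq r 1 r 0 (2*r) \<noteq> 0"
      using Dseq_low(2)[of 1 r 0 r] pos r by (simp add: bC_def)
    fix k assume k: "k \<noteq> 2*r"
    show "Dseq r 1 r 0 k = 0"
    proof (cases "k < 2*r")
      case True then show ?thesis using Dseq_low(1)[of 1 r 0 r k] r by simp
    next
      case False
      then have "k > r + r" using k by simp
      then show ?thesis unfolding Dseq_top
        using conv_top(2)[of r "aC r 1" r "bC r 0" k, OF aC_deg bC_deg]
              conv_top(2)[of r "aC r 0" "r - 1" "bC r 1" k, OF aC_deg bC_deg] by simp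
    qed
  qed (use z in auto)
  then show ?thesis using True by (simp add: mult.commute)
next
  case False
  then have h1: "h = 1" using h by simp
  have pos: "eC r 0 (2*r+1-0) > 0" by (rule E_pos) (use r in auto)
  have "polyA r 0 z * polyB (r+1) 1 z \<noteq> polyA (r+1) 1 z * polyB r 0 z"
  proof (rule D_nonzero[where N = "r + 1" and kz = "2*r+1"])
    show "Dseq r 0 (r+1) 1 (2*r+1) \<noteq> 0"
    proof -
      have cpos: "(0::real) < real ((2*r) choose r)" by simp
      have "(0::real) < real ((2*r) choose r) + real ((2*r) choose Suc r)"
        using cpos by (simp add: add_pos_nonneg)
      then show ?thesis using Dseq_low(2)[of 0 r 1 "r+1"] pos r by (simp add: bC_def)
    qed
    fix k assume k: "k \<noteq> 2*r+1"
    show "Dseq r 0 (r+1) 1 k = 0"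
    proof (cases "k < 2*r+1")
      case True then show ?thesis using Dseq_low(1)[of 0 r 1 "r+1" k] r by simp
    next
      case False
      then have k2: "k > (r+1) + r" using k by simp
      then have k3: "k > r + (r + 1 - 1)" by simp
      show ?thesis unfolding Dseq_top
        using conv_top(2)[of "r+1" "aC (r+1) 1" r "bC r 0" k, OF aC_deg bC_deg k2]
              conv_top(2)[of r "aC r 0" "r + 1 - 1" "bC (r+1) 1" k, OF aC_deg bC_deg k3] by simp
    qed
  qed (use z in auto)
  then show ?thesis using h1 by simp
qed



definition hypP :: "complex \<Rightarrow> complex \<Rightarrow> complex \<Rightarrow> complex poly \<Rightarrow> complex poly" where
  "hypP a b c p = [:0,1:] * pderiv (pderiv p) + [:c:] * pderiv p
     - [:0,1:] * ([:0,1:] * pderiv (pderiv p)) - [:a+b+1:] * ([:0,1:] * pderiv p) - [:a*b:] * p"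

lemma hypP_coeff: "coeff (hypP a b c p) n = (of_nat n + 1) * (of_nat n + c) * coeff p (Suc n) - (of_nat n + a) * (of_nat n + b) * coeff p n"
proof -
  have X: "coeff ([:0,1:] * f) n = (if n = 0 then 0 else coeff f (n - 1))" for f :: "complex poly"
    by (cases n) (simp_all add: coeff_pCons)
  have C: "coeff ([:c:] * f) n = c * coeff f n" for c and f :: "complex poly" by simp
  have X2: "coeff ([:0,1:] * ([:0,1:] * pderiv (pderiv p))) n = of_nat n * (of_nat n - 1) * coeff p n"
  proof (cases n)
    case 0 then show ?thesis by (simp add: X)
  next
    case (Suc m) then show ?thesis
      by (cases m) (simp_all add: X coeff_pderiv algebra_simps)
  qed
  have X1: "coeff ([:0,1:] * pderiv (pderiv p)) n = of_nat n * (of_nat n + 1) * coeff p (Suc n)"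
    by (cases n) (simp_all add: X coeff_pderiv algebra_simps)
  have X3: "coeff ([:0,1:] * pderiv p) n = of_nat n * coeff p n"
    by (cases n) (simp_all add: X coeff_pderiv)
  show ?thesis unfolding hypP_def coeff_diff coeff_add X1 X2 C X3
    by (simp add: coeff_pderiv algebra_simps)
qed

lemma ring_id2:
  fixes X P0 P1 P2 c k ab :: "'a::comm_ring_1"
  shows "X * P2 + (k - c) * (- P1) - X * (X * P2) - k * (X * (- P1)) - ab * P0
       = (1 - X) * P2 + c * P1 - (1 - X) * ((1 - X) * P2) - k * ((1 - X) * P1) - ab * P0"
  by (simp add: algebra_simps)

lemma hypP_compose:
  assumes "hypP a b c p = 0"
  shows "hypP a b (a+b+1-c) (pcompose p [:1,-1:]) = 0"
proof -
  let ?L = "[:1,-1:] :: complex poly"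
  let ?P2 = "pcompose (pderiv (pderiv p)) ?L" and ?P1 = "pcompose (pderiv p) ?L" and ?P0 = "pcompose p ?L"
  have L: "?L = 1 - [:0,1:]" by (rule poly_eqI) (simp add: coeff_pCons split: nat.split)
  have XL: "pcompose [:0,1:] ?L = ?L" by (simp add: pcompose_pCons)
  have d1: "pderiv ?P0 = - ?P1" by (simp add: pderiv_pcompose pderiv_pCons)
  have d2: "pderiv (- ?P1) = ?P2" by (simp add: pderiv_pcompose pderiv_pCons pderiv_minus)
  have "pcompose (hypP a b c p) ?L = 0" using assms by simp
  then have h: "?L * ?P2 + [:c:] * ?P1 - ?L * (?L * ?P2) - [:a+b+1:] * (?L * ?P1) - [:a*b:] * ?P0 = 0"
    unfolding hypP_def by (simp only: pcompose_diff pcompose_add pcompose_mult XL pcompose_const)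
  have k: "[:a+b+1-c:] = [:a+b+1:] - [:c:]" by simp
  show ?thesis unfolding hypP_def d2 d1 k ring_id2 L[symmetric] using h by simp
qed



definition pAc :: "nat \<Rightarrow> nat \<Rightarrow> complex poly" where
  "pAc r g = (\<Sum>m\<le>r. monom (complex_of_real (aC r g m)) m)"

lemma coeff_pAc: "coeff (pAc r g) k = complex_of_real (aC r g k)"
  unfolding pAc_def coeff_sum coeff_monom by (simp add: aC_def)

lemma poly_pAc: "poly (pAc r g) z = polyA r g z"
  unfolding pAc_def polyA_eq poly_sum poly_monom by simp

lemma degree_pAc: "degree (pAc r g) \<le> r"
  by (rule degree_le) (simp add: coeff_pAc aC_def)

lemma pAc_hyp:
  assumes "g \<le> 1" "1 \<le> r"
  shows "hypP (complex_of_real (- real r)) (complex_of_real (- (real r - real g + 1/4))) (complex_of_real (- (2*real r - real g))) (pAc r g) = 0"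
proof (rule poly_eqI)
  fix n
  have "(real n + 1) * (real n - (2*real r - real g)) * aC r g (Suc n)
       = (real n - real r) * (real n - (real r - real g + 1/4)) * aC r g n" by (rule aC_rec[OF assms])
  then have "complex_of_real ((real n + 1) * (real n - (2*real r - real g)) * aC r g (Suc n)
       - (real n - real r) * (real n - (real r - real g + 1/4)) * aC r g n) = 0" by simp
  then show "coeff (hypP (complex_of_real (- real r)) (complex_of_real (- (real r - real g + 1/4))) (complex_of_real (- (2*real r - real g))) (pAc r g)) n = coeff 0 n"
    unfolding hypP_coeff coeff_pAc by (simp add: algebra_simps)
qed

lemma LL: "pcompose [:1,-1:] [:1,-1:] = ([:0,1:] :: complex poly)"
  by (rule poly_eqI) (simp add: pcompose_pCons coeff_pCons split: nat.split)

lemma part_ii: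
  assumes r: "1 \<le> r" and g: "g \<in> {0,1}" and z: "norm (1 - z) \<le> 1"
  shows "norm (polyA r g z) \<le> real ((2*r - g) choose r)"
proof -
  have g1: "g \<le> 1" using g by auto
  let ?L = "[:1,-1:] :: complex poly"
  define q where "q = pcompose (pAc r g) ?L"
  define W where "W k = coeff q k" for k
  have qh: "hypP (complex_of_real (- real r)) (complex_of_real (- (real r - real g + 1/4)))
      (complex_of_real (- real r) + complex_of_real (- (real r - real g + 1/4)) + 1 - complex_of_real (- (2*real r - real g))) q = 0"
    unfolding q_def by (rule hypP_compose[OF pAc_hyp[OF g1 r]])
  have rec: "complex_of_real ((real k + 1) * (real k + 3/4)) * W (Suc k) = complex_of_real ((real k - real r) * (real k - (real r - real g + 1/4))) * W k" for k
  proof -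
    have "coeff (hypP (complex_of_real (- real r)) (complex_of_real (- (real r - real g + 1/4)))
      (complex_of_real (- real r) + complex_of_real (- (real r - real g + 1/4)) + 1 - complex_of_real (- (2*real r - real g))) q) k = 0"
      unfolding qh by simp
    then show ?thesis unfolding hypP_coeff W_def by (simp add: algebra_simps)
  qed
  have degq: "degree q \<le> r" unfolding q_def using degree_pAc[of r g] by (simp add: degree_pcompose)
  have Wz: "k > r \<Longrightarrow> W k = 0" for k unfolding W_def using degq by (simp add: coeff_eq_0)
  have tex: "\<exists>t\<ge>0. W k = complex_of_real t * W 0" for k
  proof (induction k)
    case 0 show ?case by (rule exI[of _ 1]) simp
  next
    case (Suc k)
    then obtain t where t: "t \<ge> 0" "W k = complex_of_real t * W 0" by blast
    show ?case
    proof (cases "k < r")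
      case True
      let ?P = "(real k - real r) * (real k - (real r - real g + 1/4))"
      let ?Q = "(real k + 1) * (real k + 3/4)"
      have Q0: "?Q > 0" by (intro mult_pos_pos) auto
      have P0: "?P \<ge> 0" using True g1 by (intro mult_nonpos_nonpos) auto
      have Qn: "complex_of_real ?Q \<noteq> 0" using Q0 by (metis of_real_eq_0_iff less_irrefl)
      have "W (Suc k) = (complex_of_real ?Q * W (Suc k)) / complex_of_real ?Q" using Qn by simp
      also have "\<dots> = (complex_of_real ?P * W k) / complex_of_real ?Q" unfolding rec[of k] ..
      also have "\<dots> = complex_of_real (?P / ?Q) * W k" by (simp only: of_real_divide times_divide_eq_left)
      finally have "W (Suc k) = complex_of_real (?P / ?Q) * W k" .
      then have "W (Suc k) = complex_of_real (?P / ?Q * t) * W 0" using t by simp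
      moreover have "?P / ?Q * t \<ge> 0" using P0 Q0 t by simp
      ultimately show ?thesis by blast
    next
      case False
      then show ?thesis using Wz[of "Suc k"] by (intro exI[of _ 0]) simp
    qed
  qed
  define t where "t k = (SOME t. t \<ge> 0 \<and> W k = complex_of_real t * W 0)" for k
  have t: "t k \<ge> 0 \<and> W k = complex_of_real (t k) * W 0" for k
    unfolding t_def using someI_ex[OF tex[of k, unfolded Bex_def]] by (metis (mono_tags, lifting) tex someI_ex)
  have W0: "W 0 = complex_of_real (\<Sum>m\<le>r. aC r g m)"
    unfolding W_def q_def by (simp add: poly_pAc polyA_eq)
  define w0 where "w0 = (\<Sum>m\<le>r. aC r g m)"
  have polyq: "poly q x = (\<Sum>k\<le>r. W k * x^k)" for x
    unfolding poly_altdef W_def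
    by (rule sum.mono_neutral_left) (use degq in \<open>auto simp: coeff_eq_0\<close>)
  define C where "C = real ((2*r - g) choose r)"
  have Cpos: "C > 0" unfolding C_def using r g1 by simp
  have "poly q 1 = poly (pAc r g) 0" unfolding q_def poly_pcompose by simp
  also have "\<dots> = complex_of_real C"
  proof -
    have "(2*r-g) choose (r-g) = (2*r-g) choose r"
      using binomial_symmetric[of "r-g" "2*r-g"] g1 r by (simp add: numeral_2_eq_2)
    then show ?thesis unfolding poly_pAc polyA_eq C_def by (simp add: aC_def)
  qed
  finally have "(\<Sum>k\<le>r. W k) = complex_of_real C" unfolding polyq by simp
  moreover have "(\<Sum>k\<le>r. W k) = (\<Sum>k\<le>r. complex_of_real (t k) * W 0)"
    by (rule sum.cong[OF refl]) (metis t)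
  moreover have "(\<Sum>k\<le>r. complex_of_real (t k) * W 0) = complex_of_real ((\<Sum>k\<le>r. t k) * w0)"
    unfolding W0 w0_def of_real_mult of_real_sum sum_distrib_right ..
  ultimately have "complex_of_real ((\<Sum>k\<le>r. t k) * w0) = complex_of_real C" by simp
  then have sw: "(\<Sum>k\<le>r. t k) * w0 = C" by (simp only: of_real_eq_iff)
  have ts: "(\<Sum>k\<le>r. t k) \<ge> 0" using t by (simp add: sum_nonneg)
  have w0p: "w0 > 0"
  proof (rule ccontr)
    assume "\<not> w0 > 0"
    then have "(\<Sum>k\<le>r. t k) * w0 \<le> 0" using ts by (simp add: mult_nonneg_nonpos)
    then show False using sw Cpos by simp
  qed
  have pAq: "pAc r g = pcompose q ?L"
    unfolding q_def pcompose_assoc[symmetric] LL by simp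
  have "polyA r g z = poly q (1 - z)"
    unfolding poly_pAc[symmetric] pAq poly_pcompose by simp
  also have "norm \<dots> \<le> (\<Sum>k\<le>r. norm (W k * (1-z)^k))" unfolding polyq by (rule norm_sum)
  also have "\<dots> \<le> (\<Sum>k\<le>r. t k * w0)"
  proof (rule sum_mono)
    fix k
    have W0': "W 0 = complex_of_real w0" unfolding W0 w0_def ..
    have Wk: "W k = complex_of_real (t k * w0)" using t[of k] unfolding W0' by simp
    have "norm (W k * (1-z)^k) = \<bar>t k * w0\<bar> * norm (1 - z) ^ k"
      unfolding Wk norm_mult norm_power norm_of_real ..
    also have "\<bar>t k * w0\<bar> = t k * w0" using t[of k] w0p by simp
    finally have "norm (W k * (1-z)^k) = t k * w0 * norm (1 - z) ^ k" .
    also have "\<dots> \<le> t k * w0 * 1"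
      using t[of k] w0p z by (intro mult_left_mono power_le_one) auto
    finally show "norm (W k * (1-z)^k) \<le> t k * w0" by simp
  qed
  also have "\<dots> = C" using sw by (simp add: sum_distrib_right)
  finally show ?thesis unfolding C_def .
qed


theorem lemma4p1:
  fixes r g :: nat
  assumes "r \<ge> 1" and "g \<in> {0, 1}"
  shows "(\<exists>c :: nat \<Rightarrow> complex. \<forall>z. norm z < 1 \<longrightarrow>
            summable (\<lambda>n. c n * z ^ n) \<and>
            polyA r g z - (1 - z) powr (1/4) * polyB r g z
              = z ^ (2*r + 1 - g) * (\<Sum>n. c n * z ^ n) \<and>
            norm (\<Sum>n. c n * z ^ n)
              \<le> ((real r - real g + 1/4) gchoose (r + 1 - g)) * ((real r - 1/4) gchoose r)
                 / real ((2*r + 1 - g) choose r)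
                 * (1 - norm z) powr (- (real (2*r + 1 - g) / 2)))
       \<and> (\<forall>z. norm (1 - z) \<le> 1 \<longrightarrow> norm (polyA r g z) \<le> real ((2*r - g) choose r))
       \<and> (\<forall>z h. z \<noteq> 0 \<longrightarrow> h \<in> {0, 1::nat} \<longrightarrow>
            polyA r 0 z * polyB (r + h) 1 z \<noteq> polyA (r + h) 1 z * polyB r 0 z)"
proof (intro conjI)
  show "\<exists>c :: nat \<Rightarrow> complex. \<forall>z. norm z < 1 \<longrightarrow>
            summable (\<lambda>n. c n * z ^ n) \<and>
            polyA r g z - (1 - z) powr (1/4) * polyB r g z
              = z ^ (2*r + 1 - g) * (\<Sum>n. c n * z ^ n) \<and>
            norm (\<Sum>n. c n * z ^ n)
              \<le> ((real r - real g + 1/4) gchoose (r + 1 - g)) * ((real r - 1/4) gchoose r)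
                 / real ((2*r + 1 - g) choose r)
                 * (1 - norm z) powr (- (real (2*r + 1 - g) / 2))"
  proof (intro exI allI impI)
    fix z :: complex assume z: "norm z < 1"
    show "summable (\<lambda>n. complex_of_real (eC r g (2*r+1-g + n)) * z ^ n) \<and>
            polyA r g z - (1 - z) powr (1/4) * polyB r g z
              = z ^ (2*r + 1 - g) * (\<Sum>n. complex_of_real (eC r g (2*r+1-g + n)) * z ^ n) \<and>
            norm (\<Sum>n. complex_of_real (eC r g (2*r+1-g + n)) * z ^ n)
              \<le> ((real r - real g + 1/4) gchoose (r + 1 - g)) * ((real r - 1/4) gchoose r)
                 / real ((2*r + 1 - g) choose r)
                 * (1 - norm z) powr (- (real (2*r + 1 - g) / 2))"
      using part_i[OF assms(1,2) z] unfolding E_val[OF assms(1,2)] .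
  qed
  show "\<forall>z. norm (1 - z) \<le> 1 \<longrightarrow> norm (polyA r g z) \<le> real ((2*r - g) choose r)"
    using part_ii[OF assms(1,2)] by blast
  show "\<forall>z h. z \<noteq> 0 \<longrightarrow> h \<in> {0, 1::nat} \<longrightarrow>
            polyA r 0 z * polyB (r + h) 1 z \<noteq> polyA (r + h) 1 z * polyB r 0 z"
    using part_iii[OF assms(1)] by blast
qed

end
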